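(* Let $n\ge 3$ and let $\Delta(D_{2n})$ be the commuting graph of the dihedral group $D_{2n}$. (i) If $n$ is odd, the Sombor spectrum of $\Delta(D_{2n})$ consists of $-(n-1)\sqrt2$ with multiplicity $n-2$, $0$ with multiplicity $n-1$, and the three roots (with multiplicity) of \[x^3+\sqrt2(3n-n^2-2)x^2+(15n^2-9n^3-10n+2)x+\sqrt2(4n^5-16n^4+22n^3-14n^2+4n).\] (ii) If $n$ is even, the Sombor spectrum of $\Delta(D_{2n})$ consists of $-(2n-1)\sqrt2$ with multiplicity $1$, $-(n-1)\sqrt2$ with multiplicity $n-3$, $-3\sqrt2$ with multiplicity $n/2$, and the roots (with multiplicity) of \[\big(x-(2n-1)\sqrt2\big)\big(x-(n-1)(n-3)\sqrt2\big)(x-3\sqrt2)^{n/2}-2(n-2)(5n^2-6n+2)(x-3\sqrt2)^{n/2}-4n(2n^2-2n+5)\big(x-(n-3)(n-1)\sqrt2\big)(x-3\sqrt2)^{n/2-1}.\]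
   Context: For a finite simple graph $\Gamma$ with vertices $u_1,\dots,u_N$, the Sombor matrix $S(\Gamma)$ has $(i,j)$ entry $\sqrt{\deg(u_i)^2+\deg(u_j)^2}$ if $u_i,u_j$ are adjacent and $0$ otherwise; the Sombor spectrum is the multiset of its eigenvalues. The dihedral group is $D_{2n}=\langle a,b: a^n=b^2=e,\ ba=a^{-1}b\rangle$ of order $2n$. The commuting graph $\Delta(G)$ of a group $G$ has vertex set $G$, two distinct vertices $x,y$ being adjacent iff $xy=yx$. *)

theory Defs
  imports "Jordan_Normal_Form.Char_Poly" "HOL-Algebra.Group"
begin

definition graph_degree :: "'a set \<Rightarrow> ('a \<Rightarrow> 'a \<Rightarrow> bool) \<Rightarrow> 'a \<Rightarrow> nat" where
  "graph_degree V E v = card {u \<in> V. E v u}"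

definition sombor_matrix :: "'a set \<Rightarrow> ('a \<Rightarrow> 'a \<Rightarrow> bool) \<Rightarrow> 'a list \<Rightarrow> real mat" where
  "sombor_matrix V E vs = mat (length vs) (length vs)
     (\<lambda>(i, j). if E (vs ! i) (vs ! j)
               then sqrt (real (graph_degree V E (vs ! i)) ^ 2 + real (graph_degree V E (vs ! j)) ^ 2)
               else 0)"

definition commuting_adj :: "('a, 'b) monoid_scheme \<Rightarrow> 'a \<Rightarrow> 'a \<Rightarrow> bool" where
  "commuting_adj G x y \<longleftrightarrow> x \<noteq> y \<and> x \<otimes>\<^bsub>G\<^esub> y = y \<otimes>\<^bsub>G\<^esub> x"

text \<open>Dihedral group D_{2n}: the element a^i b^s is represented by (i, s) with 0 \<le> i < n
  and s :: bool (s = True meaning a factor b).  Multiplication: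
  (a^i b^s)(a^j b^t) = a^(i + (-1)^s j) b^(s+t), using b a = a^(-1) b.\<close>

definition dihedral_mult :: "nat \<Rightarrow> int \<times> bool \<Rightarrow> int \<times> bool \<Rightarrow> int \<times> bool" where
  "dihedral_mult n x y =
     ((fst x + (if snd x then - fst y else fst y)) mod int n, snd x \<noteq> snd y)"

definition dihedral_group :: "nat \<Rightarrow> (int \<times> bool) monoid" where
  "dihedral_group n = \<lparr>carrier = {0..<int n} \<times> UNIV, mult = dihedral_mult n, one = (0, False)\<rparr>"

end

theory Submission
  imports Defs
begin



lemma schur_det:
  fixes D :: "'a::field mat"
  assumes D: "D \<in> carrier_mat N N" and Di: "Di \<in> carrier_mat N N" and DDi: "Di * D = 1\<^sub>m N"
  and U: "U \<in> carrier_mat N k" and V: "V \<in> carrier_mat k N"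
  shows "det (D - U * V) = det D * det (1\<^sub>m k - V * Di * U)"
proof -
  define M where "M = four_block_mat D U V (1\<^sub>m k)"
  define L1 where "L1 = four_block_mat (1\<^sub>m N) (0\<^sub>m N k) (-V) (1\<^sub>m k)"
  define L2 where "L2 = four_block_mat (1\<^sub>m N) (0\<^sub>m N k) (-(V*Di)) (1\<^sub>m k)"
  have Mc: "M \<in> carrier_mat (N+k) (N+k)" unfolding M_def using D U V by auto
  have L1c: "L1 \<in> carrier_mat (N+k) (N+k)" unfolding L1_def using V by auto
  have L2c: "L2 \<in> carrier_mat (N+k) (N+k)" unfolding L2_def using V Di by auto
  have dL1: "det L1 = 1" unfolding L1_def
    by (subst det_four_block_mat_upper_right_zero[of _ N _ k]) (use V in auto)
  have dL2: "det L2 = 1" unfolding L2_def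
    by (subst det_four_block_mat_upper_right_zero[of _ N _ k]) (use V Di in auto)
  have VDi: "V * Di \<in> carrier_mat k N" using V Di by auto
  have "M * L1 = four_block_mat (D * 1\<^sub>m N + U * - V) (D * 0\<^sub>m N k + U * 1\<^sub>m k)
      (V * 1\<^sub>m N + 1\<^sub>m k * - V) (V * 0\<^sub>m N k + 1\<^sub>m k * 1\<^sub>m k)"
    unfolding M_def L1_def by (rule mult_four_block_mat) (use D U V in auto)
  also have "\<dots> = four_block_mat (D - U * V) U (0\<^sub>m k N) (1\<^sub>m k)"
    using D U V by (auto simp: minus_add_uminus_mat[symmetric])
  finally have ML1: "M * L1 = four_block_mat (D - U * V) U (0\<^sub>m k N) (1\<^sub>m k)" .
  have "det M = det (M * L1)" using det_mult[OF Mc L1c] dL1 by simp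
  also have "\<dots> = det (D - U * V)" unfolding ML1
    by (subst det_four_block_mat_lower_left_zero[of _ N _ k]) (use D U V in auto)
  finally have 1: "det M = det (D - U * V)" .
  have "L2 * M = four_block_mat (1\<^sub>m N * D + 0\<^sub>m N k * V) (1\<^sub>m N * U + 0\<^sub>m N k * 1\<^sub>m k)
      (- (V * Di) * D + 1\<^sub>m k * V) (- (V * Di) * U + 1\<^sub>m k * 1\<^sub>m k)"
    unfolding M_def L2_def by (rule mult_four_block_mat) (use D U V Di in auto)
  also have "\<dots> = four_block_mat D U (0\<^sub>m k N) (1\<^sub>m k - V * Di * U)"
  proof -
    have "- (V * Di) * D = - V" using V Di D DDi by (simp add: assoc_mult_mat[OF V Di D])
    moreover have "- (V * Di) * U + 1\<^sub>m k * 1\<^sub>m k = 1\<^sub>m k - V * Di * U"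
      using V Di U by (subst minus_add_uminus_mat) (auto simp: comm_add_mat[of _ k k])
    ultimately show ?thesis using D U V Di by auto
  qed
  finally have L2M: "L2 * M = four_block_mat D U (0\<^sub>m k N) (1\<^sub>m k - V * Di * U)" .
  have "det M = det (L2 * M)" using det_mult[OF L2c Mc] dL2 by simp
  also have "\<dots> = det D * det (1\<^sub>m k - V * Di * U)" unfolding L2M
    by (subst det_four_block_mat_lower_left_zero[of _ N _ k]) (use D U V Di in auto)
  finally show ?thesis using 1 by simp
qed

definition diag_m :: "nat \<Rightarrow> (nat \<Rightarrow> 'a::comm_ring_1) \<Rightarrow> 'a mat" where
  "diag_m n f = mat n n (\<lambda>(i,j). if i = j then f i else 0)"

lemma diag_m_carrier[simp]: "diag_m n f \<in> carrier_mat n n"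
  by (simp add: diag_m_def)

lemma det_diag_m: "det (diag_m n f) = (\<Prod>i<n. f i)"
proof -
  have "det (diag_m n f) = prod_list (diag_mat (diag_m n f))"
    by (rule det_upper_triangular[of _ n]) (auto simp: upper_triangular_def diag_m_def)
  also have "\<dots> = (\<Prod>i<n. f i)"
    by (simp add: diag_mat_def diag_m_def prod.list_conv_set_nth lessThan_atLeast0)
  finally show ?thesis .
qed

lemma sum_if_card: "(\<Sum>j<(N::nat). if P j then (t::'a::comm_ring_1) else 0) = t * of_nat (card {j. j < N \<and> P j})"
proof -
  have "(\<Sum>j<N. if P j then t else 0) = (\<Sum>j\<in>{j\<in>{..<N}. P j}. t)"
    using sum.inter_filter[of "{..<N}" "\<lambda>_. t" P] by simp
  also have "{j\<in>{..<N}. P j} = {j. j < N \<and> P j}" by auto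
  finally show ?thesis by simp
qed

lemma sum_delta_mult1: "(\<Sum>l\<in>{0..<(n::nat)}. (if i = l then a l else 0) * b l) = (if i < n then a i * b i else (0::'a::comm_semiring_1))"
proof -
  have "(\<Sum>l\<in>{0..<n}. (if i = l then a l else 0) * b l) = (\<Sum>l\<in>{0..<n}. if i = l then a l * b l else 0)"
    by (rule sum.cong) auto
  then show ?thesis by (simp add: sum.delta sum.delta')
qed

lemma sum_delta_mult2: "(\<Sum>l\<in>{0..<(n::nat)}. b l * (if l = j then a l else 0)) = (if j < n then b j * a j else (0::'a::comm_semiring_1))"
proof -
  have "(\<Sum>l\<in>{0..<n}. b l * (if l = j then a l else 0)) = (\<Sum>l\<in>{0..<n}. if l = j then b l * a l else 0)"
    by (rule sum.cong) auto
  then show ?thesis by (simp add: sum.delta sum.delta')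
qed

lemma diag_m_mult_left: "A \<in> carrier_mat n m \<Longrightarrow> diag_m n f * A = mat n m (\<lambda>(i,j). f i * A $$ (i,j))"
  by (rule eq_matI) (auto simp: diag_m_def scalar_prod_def sum_delta_mult1)

lemma diag_m_mult_right: "A \<in> carrier_mat m n \<Longrightarrow> A * diag_m n f = mat m n (\<lambda>(i,j). A $$ (i,j) * f j)"
  by (rule eq_matI) (auto simp: diag_m_def scalar_prod_def sum_delta_mult2)

lemma quotient_det_point:
  fixes S :: "'a::field mat" and cls :: "nat \<Rightarrow> nat" and w :: "nat \<Rightarrow> 'a" and B :: "nat \<Rightarrow> nat \<Rightarrow> 'a"
  assumes S: "S \<in> carrier_mat N N"
  and cls: "\<And>i. i < N \<Longrightarrow> cls i < k"
  and Sent: "\<And>i j. i < N \<Longrightarrow> j < N \<Longrightarrow> S $$ (i,j) = B (cls i) (cls j) - (if i = j then w (cls i) else 0)"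
  and cnt: "\<And>K. K < k \<Longrightarrow> card {i. i < N \<and> cls i = K} > 0"
  and xw: "\<And>K. K < k \<Longrightarrow> x + w K \<noteq> 0"
  shows "det (x \<cdot>\<^sub>m 1\<^sub>m N - S) = (\<Prod>K<k. (x + w K) ^ (card {i. i < N \<and> cls i = K} - 1)) *
     det (x \<cdot>\<^sub>m 1\<^sub>m k - mat k k (\<lambda>(K,L). B K L * of_nat (card {i. i < N \<and> cls i = L}) - (if K = L then w K else 0)))"
proof -
  define c where "c L = card {i. i < N \<and> cls i = L}" for L
  define D where "D = diag_m N (\<lambda>i. x + w (cls i))"
  define Di where "Di = diag_m N (\<lambda>i. 1 / (x + w (cls i)))"
  define U where "U = mat N k (\<lambda>(i,K). if cls i = K then 1 else (0::'a))"
  define V where "V = mat k N (\<lambda>(K,j). B K (cls j))"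
  define Q where "Q = mat k k (\<lambda>(K,L). B K L * of_nat (c L) - (if K = L then w K else 0))"
  define E where "E = diag_m k (\<lambda>L. x + w L)"
  have Dc: "D \<in> carrier_mat N N" and Dic: "Di \<in> carrier_mat N N" and Uc: "U \<in> carrier_mat N k"
    and Vc: "V \<in> carrier_mat k N" and Qc: "Q \<in> carrier_mat k k" and Ec: "E \<in> carrier_mat k k"
    by (auto simp: D_def Di_def U_def V_def Q_def E_def)
  have DiD: "Di * D = 1\<^sub>m N"
    unfolding Di_def by (subst diag_m_mult_left[OF Dc], rule eq_matI) (auto simp: D_def diag_m_def cls xw)
  have UV: "x \<cdot>\<^sub>m 1\<^sub>m N - S = D - U * V"
  proof (rule eq_matI)
    fix i j assume i: "i < dim_row (D - U * V)" and j: "j < dim_col (D - U * V)"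
    then have i: "i < N" and j: "j < N" using Dc Uc Vc by auto
    have "(U * V) $$ (i,j) = (\<Sum>K\<in>{0..<k}. (if cls i = K then 1 else 0) * B K (cls j))"
      using i j by (simp add: U_def V_def scalar_prod_def)
    also have "\<dots> = B (cls i) (cls j)" using cls[OF i] sum_delta_mult1[of "cls i" "\<lambda>_. 1" "\<lambda>K. B K (cls j)" k] by simp
    finally show "(x \<cdot>\<^sub>m 1\<^sub>m N - S) $$ (i, j) = (D - U * V) $$ (i, j)"
      using i j S Dc Uc Vc by (auto simp: Sent D_def diag_m_def)
  qed (use S Dc Uc Vc in auto)
  have VDiU: "V * Di * U = mat k k (\<lambda>(K,L). B K L / (x + w L) * of_nat (c L))"
  proof -
    have VDi: "V * Di = mat k N (\<lambda>(K,j). B K (cls j) * (1 / (x + w (cls j))))"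
      unfolding Di_def by (subst diag_m_mult_right[OF Vc]) (auto simp: V_def)
    show ?thesis
    proof (rule eq_matI)
      fix K L assume K: "K < dim_row (mat k k (\<lambda>(K,L). B K L / (x + w L) * of_nat (c L)))"
        and L: "L < dim_col (mat k k (\<lambda>(K,L). B K L / (x + w L) * of_nat (c L)))"
      then have K: "K < k" and L: "L < k" by auto
      have "(V * Di * U) $$ (K,L) = (\<Sum>j\<in>{0..<N}. B K (cls j) * (1 / (x + w (cls j))) * (if cls j = L then 1 else 0))"
        unfolding VDi using K L by (simp add: U_def scalar_prod_def)
      also have "\<dots> = (\<Sum>j<N. if cls j = L then B K L / (x + w L) else 0)"
        by (rule sum.cong) auto
      also have "\<dots> = B K L / (x + w L) * of_nat (c L)" by (simp add: sum_if_card c_def)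
      finally show "(V * Di * U) $$ (K,L) = mat k k (\<lambda>(K,L). B K L / (x + w L) * of_nat (c L)) $$ (K,L)"
        using K L by simp
    qed (use Vc Dic Uc in auto)
  qed
  have IE: "(1\<^sub>m k - V * Di * U) * E = x \<cdot>\<^sub>m 1\<^sub>m k - Q"
    unfolding E_def VDiU
  proof (subst diag_m_mult_right[of _ k], force, rule eq_matI)
    fix K L assume "K < dim_row (x \<cdot>\<^sub>m 1\<^sub>m k - Q)" "L < dim_col (x \<cdot>\<^sub>m 1\<^sub>m k - Q)"
    then have K: "K < k" and L: "L < k" using Qc by auto
    have xL: "x + w L \<noteq> 0" using xw[OF L] .
    have "((if K = L then 1 else 0) - B K L / (x + w L) * of_nat (c L)) * (x + w L)
        = (if K = L then x + w L else 0) - B K L * of_nat (c L)"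
      using xL by (simp add: field_simps)
    then show "mat k k (\<lambda>(i, j). (1\<^sub>m k - mat k k (\<lambda>(K, L). B K L / (x + w L) * of_nat (c L))) $$ (i, j) * (x + w j)) $$ (K, L) =
         (x \<cdot>\<^sub>m 1\<^sub>m k - Q) $$ (K, L)"
      using K L by (auto simp: Q_def)
  qed (use Qc in auto)
  have detE: "det E = (\<Prod>L<k. x + w L)" unfolding E_def by (rule det_diag_m)
  have detE0: "det E \<noteq> 0" unfolding detE using xw by (auto simp: prod_zero_iff)
  have IEc: "1\<^sub>m k - V * Di * U \<in> carrier_mat k k" using Vc Dic Uc by auto
  have "det (x \<cdot>\<^sub>m 1\<^sub>m k - Q) = det (1\<^sub>m k - V * Di * U) * det E"
    unfolding IE[symmetric] by (rule det_mult[OF IEc Ec])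
  then have dI: "det (1\<^sub>m k - V * Di * U) = det (x \<cdot>\<^sub>m 1\<^sub>m k - Q) / det E"
    using detE0 by (simp add: field_simps)
  have detD: "det D = (\<Prod>K<k. (x + w K) ^ c K)"
  proof -
    have "det D = (\<Prod>i<N. x + w (cls i))" unfolding D_def by (rule det_diag_m)
    also have "\<dots> = (\<Prod>K<k. \<Prod>i\<in>{i\<in>{..<N}. cls i = K}. x + w (cls i))"
      by (rule prod.group[symmetric]) (auto simp: cls)
    also have "\<dots> = (\<Prod>K<k. (x + w K) ^ c K)"
    proof (rule prod.cong[OF refl])
      fix K assume "K \<in> {..<k}"
      have "(\<Prod>i\<in>{i\<in>{..<N}. cls i = K}. x + w (cls i)) = (\<Prod>i\<in>{i\<in>{..<N}. cls i = K}. x + w K)"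
        by (rule prod.cong) auto
      also have "\<dots> = (x + w K) ^ c K" by (simp add: c_def)
      finally show "(\<Prod>i\<in>{i\<in>{..<N}. cls i = K}. x + w (cls i)) = (x + w K) ^ c K" .
    qed
    finally show ?thesis .
  qed
  have pw: "(\<Prod>K<k. (x + w K) ^ c K) = (\<Prod>K<k. (x + w K) ^ (c K - 1)) * (\<Prod>L<k. x + w L)"
  proof -
    have "(\<Prod>K<k. (x + w K) ^ c K) = (\<Prod>K<k. (x + w K) ^ (c K - 1) * (x + w K))"
    proof (rule prod.cong[OF refl])
      fix K assume "K \<in> {..<k}"
      then have "c K > 0" using cnt by (simp add: c_def)
      then show "(x + w K) ^ c K = (x + w K) ^ (c K - 1) * (x + w K)"
        by (metis Suc_diff_1 power_Suc2)
    qed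
    then show ?thesis by (simp add: prod.distrib)
  qed
  have "det (x \<cdot>\<^sub>m 1\<^sub>m N - S) = det D * det (1\<^sub>m k - V * Di * U)"
    unfolding UV by (rule schur_det[OF Dc Dic DiD Uc Vc])
  also have "\<dots> = (\<Prod>K<k. (x + w K) ^ (c K - 1)) * det (x \<cdot>\<^sub>m 1\<^sub>m k - Q)"
    unfolding dI detD pw detE using detE0 detE by simp
  finally show ?thesis unfolding Q_def c_def .
qed

lemma poly_char_poly_real:
  assumes A: "(A :: real mat) \<in> carrier_mat n n"
  shows "poly (char_poly A) x = det (x \<cdot>\<^sub>m 1\<^sub>m n - A)"
proof -
  have "- char_matrix A x = x \<cdot>\<^sub>m 1\<^sub>m n - A"
    by (rule eq_matI) (use A in \<open>auto simp: char_matrix_def\<close>)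
  then show ?thesis using char_poly_matrix[OF A, of x] by simp
qed

lemma poly_eq_from_cofinite:
  fixes p q :: "real poly"
  assumes F: "finite F" and eq: "\<And>x. x \<notin> F \<Longrightarrow> poly p x = poly q x"
  shows "p = q"
proof (rule ccontr)
  assume "p \<noteq> q"
  then have "p - q \<noteq> 0" by simp
  then have fin: "finite {x. poly (p - q) x = 0}" by (rule poly_roots_finite)
  have "- F \<subseteq> {x. poly (p - q) x = 0}" using eq by auto
  then have "finite (- F)" using fin finite_subset by blast
  then have "finite (UNIV :: real set)" using F by (metis Compl_partition2 finite_Un)
  then show False using infinite_UNIV_char_0 by blast
qed

lemma quotient_charpoly:
  fixes S :: "real mat" and cls :: "nat \<Rightarrow> nat" and w :: "nat \<Rightarrow> real" and B :: "nat \<Rightarrow> nat \<Rightarrow> real"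
  assumes S: "S \<in> carrier_mat N N"
  and cls: "\<And>i. i < N \<Longrightarrow> cls i < k"
  and Sent: "\<And>i j. i < N \<Longrightarrow> j < N \<Longrightarrow> S $$ (i,j) = B (cls i) (cls j) - (if i = j then w (cls i) else 0)"
  and cnt: "\<And>K. K < k \<Longrightarrow> card {i. i < N \<and> cls i = K} > 0"
  shows "char_poly S = (\<Prod>K<k. [:w K, 1:] ^ (card {i. i < N \<and> cls i = K} - 1)) *
     char_poly (mat k k (\<lambda>(K,L). B K L * real (card {i. i < N \<and> cls i = L}) - (if K = L then w K else 0)))"
proof (rule poly_eq_from_cofinite[of "(\<lambda>K. - w K) ` {..<k}"])
  fix x assume "x \<notin> (\<lambda>K. - w K) ` {..<k}"
  then have xw: "\<And>K. K < k \<Longrightarrow> x + w K \<noteq> 0" by (force simp: add_eq_0_iff)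
  show "poly (char_poly S) x = poly ((\<Prod>K<k. [:w K, 1:] ^ (card {i. i < N \<and> cls i = K} - 1)) *
     char_poly (mat k k (\<lambda>(K,L). B K L * real (card {i. i < N \<and> cls i = L}) - (if K = L then w K else 0)))) x"
    unfolding poly_mult poly_prod poly_power poly_char_poly_real[OF S]
    by (subst poly_char_poly_real[of _ k], force, subst quotient_det_point[OF S cls Sent cnt xw])
       (auto simp: add.commute)
qed simp


lemma det2: assumes A: "(A::'a::comm_ring_1 mat) \<in> carrier_mat 2 2"
  shows "det A = A$$(0,0)*A$$(1,1) - A$$(0,1)*A$$(1,0)"
proof -
  have "det A = (\<Sum>j<2. A$$(0,j) * cofactor A 0 j)" by (rule laplace_expansion_row[OF A]) simp
  also have "\<dots> = A$$(0,0) * cofactor A 0 0 + A$$(0,1) * cofactor A 0 1" by (simp add: numeral_2_eq_2)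
  also have "cofactor A 0 0 = A$$(1,1)"
    unfolding cofactor_def using A by (subst det_single) (auto simp: mat_delete_def insert_index_def numeral_2_eq_2)
  also have "cofactor A 0 1 = - A$$(1,0)"
    unfolding cofactor_def using A by (subst det_single) (auto simp: mat_delete_def insert_index_def numeral_2_eq_2)
  finally show ?thesis by simp
qed

lemma det3: assumes A: "(A::'a::comm_ring_1 mat) \<in> carrier_mat 3 3"
  shows "det A = A$$(0,0)*(A$$(1,1)*A$$(2,2) - A$$(1,2)*A$$(2,1))
     - A$$(0,1)*(A$$(1,0)*A$$(2,2) - A$$(1,2)*A$$(2,0))
     + A$$(0,2)*(A$$(1,0)*A$$(2,1) - A$$(1,1)*A$$(2,0))"
proof -
  have "det A = (\<Sum>j<3. A$$(0,j) * cofactor A 0 j)" by (rule laplace_expansion_row[OF A]) simp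
  also have "\<dots> = A$$(0,0) * cofactor A 0 0 + A$$(0,1) * cofactor A 0 1 + A$$(0,2) * cofactor A 0 2"
    by (simp add: numeral_3_eq_3 numeral_2_eq_2)
  also have "cofactor A 0 0 = A$$(1,1)*A$$(2,2) - A$$(1,2)*A$$(2,1)"
    unfolding cofactor_def using A by (subst det2) (auto simp: mat_delete_def insert_index_def numeral_2_eq_2)
  also have "cofactor A 0 1 = - (A$$(1,0)*A$$(2,2) - A$$(1,2)*A$$(2,0))"
    unfolding cofactor_def using A by (subst det2) (auto simp: mat_delete_def insert_index_def numeral_2_eq_2)
  also have "cofactor A 0 2 = A$$(1,0)*A$$(2,1) - A$$(1,1)*A$$(2,0)"
    unfolding cofactor_def using A by (subst det2) (auto simp: mat_delete_def insert_index_def numeral_2_eq_2)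
  finally show ?thesis by (simp add: algebra_simps)
qed
lemma charpoly3:
  assumes A: "(A::real mat) \<in> carrier_mat 3 3"
  shows "char_poly A = [: - (A$$(0,0)*(A$$(1,1)*A$$(2,2) - A$$(1,2)*A$$(2,1))
     - A$$(0,1)*(A$$(1,0)*A$$(2,2) - A$$(1,2)*A$$(2,0))
     + A$$(0,2)*(A$$(1,0)*A$$(2,1) - A$$(1,1)*A$$(2,0))),
     A$$(0,0)*A$$(1,1) - A$$(0,1)*A$$(1,0) + A$$(0,0)*A$$(2,2) - A$$(0,2)*A$$(2,0) + A$$(1,1)*A$$(2,2) - A$$(1,2)*A$$(2,1),
     - (A$$(0,0) + A$$(1,1) + A$$(2,2)), 1 :]"
proof (rule poly_eq_from_cofinite[of "{}"])
  fix x
  have "- char_matrix A x \<in> carrier_mat 3 3" using A by simp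
  then show "poly (char_poly A) x = poly [: - (A$$(0,0)*(A$$(1,1)*A$$(2,2) - A$$(1,2)*A$$(2,1))
     - A$$(0,1)*(A$$(1,0)*A$$(2,2) - A$$(1,2)*A$$(2,0))
     + A$$(0,2)*(A$$(1,0)*A$$(2,1) - A$$(1,1)*A$$(2,0))),
     A$$(0,0)*A$$(1,1) - A$$(0,1)*A$$(1,0) + A$$(0,0)*A$$(2,2) - A$$(0,2)*A$$(2,0) + A$$(1,1)*A$$(2,2) - A$$(1,2)*A$$(2,1),
     - (A$$(0,0) + A$$(1,1) + A$$(2,2)), 1 :] x"
    unfolding char_poly_matrix[OF A] using A
    by (subst det3) (auto simp: char_matrix_def algebra_simps)
qed simp


lemma carrier_dih: "carrier (dihedral_group n) = {0..<int n} \<times> UNIV"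
  by (simp add: dihedral_group_def)

lemma adj_iff:
  "commuting_adj (dihedral_group n) u v \<longleftrightarrow> u \<noteq> v \<and>
    (if snd u then (if snd v then int n dvd 2*(fst u - fst v) else int n dvd 2 * fst v)
     else (if snd v then int n dvd 2 * fst u else True))"
proof -
  obtain i s j t where u: "u = (i,s)" and v: "v = (j,t)" by (cases u, cases v)
  show ?thesis unfolding u v
    by (cases s; cases t)
       (auto simp: commuting_adj_def dihedral_group_def dihedral_mult_def mod_eq_dvd_iff
          algebra_simps)
qed

lemma dvd2_iff: assumes "0 \<le> i" "i < int n"
  shows "int n dvd 2*i \<longleftrightarrow> i = 0 \<or> 2*i = int n"
proof
  assume "int n dvd 2*i"
  then obtain k where k: "2*i = int n * k" by (auto simp: dvd_def)
  have npos: "int n > 0" using assms by linarith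
  have "k \<le> 0 \<or> k = 1 \<or> k \<ge> 2" by linarith
  moreover have "k \<le> 0 \<Longrightarrow> i = 0"
    using k assms mult_nonneg_nonpos[of "int n" k] npos by linarith
  moreover have "k \<ge> 2 \<Longrightarrow> False"
    using k assms mult_left_mono[of 2 k "int n"] npos by linarith
  ultimately show "i = 0 \<or> 2*i = int n" using k by auto
qed auto

lemma dvd2diff_iff: assumes "0 \<le> i" "i < int n" "0 \<le> j" "j < int n"
  shows "int n dvd 2*i - 2*j \<longleftrightarrow> i = j \<or> 2*(i-j) = int n \<or> 2*(j-i) = int n"
proof
  assume "int n dvd 2*i - 2*j"
  then obtain k where k: "2*(i-j) = int n * k" by (auto simp: dvd_def algebra_simps)
  have npos: "int n > 0" using assms by linarith
  have "k \<le> -2 \<or> k = -1 \<or> k = 0 \<or> k = 1 \<or> k \<ge> 2" by linarith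
  moreover have "k \<le> -2 \<Longrightarrow> False"
  proof -
    assume "k \<le> -2"
    then have "int n * k \<le> int n * (-2)" using npos by (intro mult_left_mono) auto
    then have "2 * (i - j) \<le> - 2 * int n" using k by simp
    then show False using assms by presburger
  qed
  moreover have "k \<ge> 2 \<Longrightarrow> False"
  proof -
    assume "k \<ge> 2"
    then have "int n * 2 \<le> int n * k" using npos by (intro mult_left_mono) auto
    then have "2 * int n \<le> 2 * (i - j)" using k by simp
    then show False using assms by presburger
  qed
  ultimately show "i = j \<or> 2*(i-j) = int n \<or> 2*(j-i) = int n" using k by auto
next
  assume "i = j \<or> 2*(i-j) = int n \<or> 2*(j-i) = int n"
  then show "int n dvd 2*i - 2*j"
  proof (elim disjE)
    assume "2*(j-i) = int n"
    then have "2*i - 2*j = int n * (-1)" by simp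
    then show ?thesis by (metis dvd_triv_left)
  next
    assume "2*(i-j) = int n"
    then have "2*i - 2*j = int n * 1" by simp
    then show ?thesis by (metis dvd_triv_left)
  qed auto
qed


lemma charpoly3_fun:
  "char_poly (mat 3 3 (\<lambda>(i,j). g i j) :: real mat) = [: - (g 0 0*(g 1 1*g 2 2 - g 1 2*g 2 1)
     - g 0 1*(g 1 0*g 2 2 - g 1 2*g 2 0)
     + g 0 2*(g 1 0*g 2 1 - g 1 1*g 2 0)),
     g 0 0*g 1 1 - g 0 1*g 1 0 + g 0 0*g 2 2 - g 0 2*g 2 0 + g 1 1*g 2 2 - g 1 2*g 2 1,
     - (g 0 0 + g 1 1 + g 2 2), 1 :]"
  by (subst charpoly3) auto

lemma sqrt_2sq: "x \<ge> 0 \<Longrightarrow> sqrt (2 * x^2) = x * sqrt 2"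
  by (simp add: real_sqrt_mult mult.commute)

lemma sqrt_sq2: "x \<ge> 0 \<Longrightarrow> sqrt (x^2 + x^2) = x * sqrt 2"
proof -
  assume "x \<ge> 0"
  have "x^2 + x^2 = 2 * x^2" by simp
  then show ?thesis using \<open>x \<ge> 0\<close> by (simp add: real_sqrt_mult mult.commute)
qed
definition central :: "nat \<Rightarrow> int \<Rightarrow> bool" where
  "central n i \<longleftrightarrow> i = 0 \<or> 2*i = int n"

definition ddeg :: "nat \<Rightarrow> int \<times> bool \<Rightarrow> nat" where
  "ddeg n u = (if snd u then (if odd n then 1 else 3) else if central n (fst u) then 2*n - 1 else n - 1)"

lemma card_carrier: "card (carrier (dihedral_group n)) = 2 * n"
  by (simp add: carrier_dih card_cartesian_product)

lemma deg_dih: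
  assumes n: "n \<ge> 3" and u: "u \<in> carrier (dihedral_group n)"
  shows "graph_degree (carrier (dihedral_group n)) (commuting_adj (dihedral_group n)) u = ddeg n u"
proof -
  obtain i s where us: "u = (i,s)" by (cases u)
  have i: "0 \<le> i" "i < int n" using u us by (auto simp: carrier_dih)
  let ?V = "carrier (dihedral_group n)"
  let ?E = "commuting_adj (dihedral_group n)"
  show ?thesis
  proof (cases s)
    case False
    show ?thesis
    proof (cases "central n i")
      case True
      have "{v \<in> ?V. ?E u v} = ?V - {u}"
        using True i by (auto simp: adj_iff us central_def carrier_dih False)
      then have "card {v \<in> ?V. ?E u v} = 2 * n - 1" using u by (simp add: card_carrier)
      then show ?thesis using True False us by (simp add: graph_degree_def ddeg_def)
    next
      case nc: False
      have "{v \<in> ?V. ?E u v} = ({0..<int n} - {i}) \<times> {False}"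
        using nc i by (auto simp: adj_iff us carrier_dih False dvd2_iff central_def)
      then have "card {v \<in> ?V. ?E u v} = n - 1" using i by (simp add: card_cartesian_product)
      then show ?thesis using nc False us by (simp add: graph_degree_def ddeg_def)
    qed
  next
    case True
    show ?thesis
    proof (cases "odd n")
      case odd: True
      have "{v \<in> ?V. ?E u v} = {(0, False)}"
      proof -
        have o1: "2 * x \<noteq> int n" for x using odd by presburger
        show ?thesis
        proof (intro equalityI subsetI)
          fix v assume v: "v \<in> {v \<in> ?V. ?E u v}"
          obtain j t where vj: "v = (j,t)" by (cases v)
          have j: "0 \<le> j" "j < int n" using v vj by (auto simp: carrier_dih)
          show "v \<in> {(0, False)}"
          proof (cases t)
            case True
            then have "int n dvd 2*i - 2*j" "u \<noteq> v" using v vj us \<open>s\<close> by (auto simp: adj_iff)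
            then have "i = j \<or> 2*(i-j) = int n \<or> 2*(j-i) = int n" using dvd2diff_iff[OF i j] by blast
            then show ?thesis using o1[of "i-j"] o1[of "j-i"] \<open>u \<noteq> v\<close> us vj True \<open>s\<close> by auto
          next
            case False
            then have "int n dvd 2*j" using v vj us \<open>s\<close> by (auto simp: adj_iff)
            then have "j = 0 \<or> 2*j = int n" using dvd2_iff[OF j] by blast
            then show ?thesis using o1 vj False by auto
          qed
        next
          fix v assume "v \<in> {(0::int, False)}"
          then show "v \<in> {v \<in> ?V. ?E u v}" using n us \<open>s\<close> by (auto simp: adj_iff carrier_dih)
        qed
      qed
      then show ?thesis using odd True us by (simp add: graph_degree_def ddeg_def)
    next
      case ev: False
      define h where "h = int n div 2"
      have h2: "int n = 2 * h" using ev unfolding h_def by presburger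
      define i' where "i' = (if i < h then i + h else i - h)"
      have hpos: "h > 0" using n h2 by linarith
      have "{v \<in> ?V. ?E u v} = {(0, False), (h, False), (i', True)}"
      proof (intro equalityI subsetI)
        fix v assume v: "v \<in> {v \<in> ?V. ?E u v}"
        obtain j t where vj: "v = (j,t)" by (cases v)
        have j: "0 \<le> j" "j < int n" using v vj by (auto simp: carrier_dih)
        show "v \<in> {(0, False), (h, False), (i', True)}"
        proof (cases t)
          case True
          then have "int n dvd 2*i - 2*j" "u \<noteq> v" using v vj us \<open>s\<close> by (auto simp: adj_iff)
          then have "i = j \<or> 2*(i-j) = int n \<or> 2*(j-i) = int n" using dvd2diff_iff[OF i j] by blast
          then have "j = i'" using \<open>u \<noteq> v\<close> us vj True \<open>s\<close> h2 i j unfolding i'_def by auto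
          then show ?thesis using vj True by simp
        next
          case False
          then have "int n dvd 2*j" using v vj us \<open>s\<close> by (auto simp: adj_iff)
          then have "j = 0 \<or> 2*j = int n" using dvd2_iff[OF j] by blast
          then have "j = 0 \<or> j = h" using h2 by auto
          then show ?thesis using vj False by auto
        qed
      next
        fix v assume v: "v \<in> {(0, False), (h, False), (i', True)}"
        have i'r: "0 \<le> i'" "i' < int n" "i' \<noteq> i" using i h2 hpos unfolding i'_def by auto
        have "int n dvd 2*i - 2*i'"
        proof (cases "i < h")
          case True
          then have "2*i - 2*i' = int n * (-1)" using h2 unfolding i'_def by simp
          then show ?thesis by (metis dvd_triv_left)
        next
          case False
          then have "2*i - 2*i' = int n * 1" using h2 unfolding i'_def by simp
          then show ?thesis by (metis dvd_triv_left)
        qed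
        moreover have "int n dvd 2 * h" using h2 by simp
        ultimately show "v \<in> {v \<in> ?V. ?E u v}" using v n us \<open>s\<close> i'r h2 hpos
          by (auto simp: adj_iff carrier_dih)
      qed
      moreover have "card {(0, False), (h, False), (i', True)} = 3"
        using n h2 by auto
      ultimately show ?thesis using ev True us by (simp add: graph_degree_def ddeg_def)
    qed
  qed
qed

definition hh :: "nat \<Rightarrow> int" where "hh n = int n div 2"

definition clsD :: "nat \<Rightarrow> int \<times> bool \<Rightarrow> nat" where
  "clsD n u = (if snd u then 2 + (if odd n then 0 else nat (if fst u < hh n then fst u else fst u - hh n))
     else if central n (fst u) then 0 else 1)"

definition AD :: "nat \<Rightarrow> nat \<Rightarrow> nat \<Rightarrow> bool" where
  "AD n K L \<longleftrightarrow> K = 0 \<or> L = 0 \<or> (K = 1 \<and> L = 1) \<or> (even n \<and> 2 \<le> K \<and> K = L)"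

definition dD :: "nat \<Rightarrow> nat \<Rightarrow> nat" where
  "dD n K = (if K = 0 then 2*n - 1 else if K = 1 then n - 1 else if odd n then 1 else 3)"

definition BD :: "nat \<Rightarrow> nat \<Rightarrow> nat \<Rightarrow> real" where
  "BD n K L = (if AD n K L then sqrt (real (dD n K) ^ 2 + real (dD n L) ^ 2) else 0)"

lemma ddeg_cls: "ddeg n u = dD n (clsD n u)"
  by (auto simp: ddeg_def dD_def clsD_def)

lemma adj_cls:
  assumes n: "n \<ge> 3" and u: "u \<in> carrier (dihedral_group n)" and v: "v \<in> carrier (dihedral_group n)"
  shows "commuting_adj (dihedral_group n) u v \<longleftrightarrow> u \<noteq> v \<and> AD n (clsD n u) (clsD n v)"
proof -
  obtain i s where us: "u = (i,s)" by (cases u)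
  obtain j t where vt: "v = (j,t)" by (cases v)
  have i: "0 \<le> i" "i < int n" using u us by (auto simp: carrier_dih)
  have j: "0 \<le> j" "j < int n" using v vt by (auto simp: carrier_dih)
  show ?thesis
  proof (cases s; cases t)
    assume st: "s" "t"
    have "commuting_adj (dihedral_group n) u v \<longleftrightarrow> u \<noteq> v \<and> int n dvd 2*i - 2*j"
      using st us vt by (simp add: adj_iff)
    also have "\<dots> \<longleftrightarrow> u \<noteq> v \<and> (i = j \<or> 2*(i-j) = int n \<or> 2*(j-i) = int n)"
      using dvd2diff_iff[OF i j] by simp
    also have "\<dots> \<longleftrightarrow> u \<noteq> v \<and> AD n (clsD n u) (clsD n v)"
    proof (cases "odd n")
      case True
      have o1: "2 * x \<noteq> int n" for x using True by presburger
      show ?thesis using True st us vt o1[of "i-j"] o1[of "j-i"] by (auto simp: AD_def clsD_def)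
    next
      case False
      have h2: "int n = 2 * hh n" using False unfolding hh_def by presburger
      have "(i = j \<or> 2*(i-j) = int n \<or> 2*(j-i) = int n) \<longleftrightarrow>
            (nat (if i < hh n then i else i - hh n) = nat (if j < hh n then j else j - hh n))"
        using i j h2 by auto
      then show ?thesis using False st us vt by (auto simp: AD_def clsD_def)
    qed
    finally show ?thesis .
  next
    assume st: "s" "\<not> t"
    have "commuting_adj (dihedral_group n) u v \<longleftrightarrow> u \<noteq> v \<and> central n j"
      using st us vt dvd2_iff[OF j] by (simp add: adj_iff central_def)
    then show ?thesis using st us vt by (auto simp: AD_def clsD_def)
  next
    assume st: "\<not> s" "t"
    have "commuting_adj (dihedral_group n) u v \<longleftrightarrow> u \<noteq> v \<and> central n i"
      using st us vt dvd2_iff[OF i] by (simp add: adj_iff central_def)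
    then show ?thesis using st us vt by (auto simp: AD_def clsD_def)
  next
    assume st: "\<not> s" "\<not> t"
    show ?thesis using st us vt by (auto simp: AD_def clsD_def adj_iff)
  qed
qed

lemma entry_cls:
  assumes n: "n \<ge> 3" and u: "u \<in> carrier (dihedral_group n)" and v: "v \<in> carrier (dihedral_group n)"
  shows "(if commuting_adj (dihedral_group n) u v then
      sqrt (real (graph_degree (carrier (dihedral_group n)) (commuting_adj (dihedral_group n)) u) ^ 2
          + real (graph_degree (carrier (dihedral_group n)) (commuting_adj (dihedral_group n)) v) ^ 2) else 0)
    = BD n (clsD n u) (clsD n v) - (if u = v then BD n (clsD n u) (clsD n u) else 0)"
  using adj_cls[OF n u v] deg_dih[OF n u] deg_dih[OF n v] by (auto simp: ddeg_cls BD_def)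




lemma nth_card:
  assumes "distinct vs"
  shows "card {l. l < length vs \<and> P (vs ! l)} = card {v \<in> set vs. P v}"
proof -
  have "{v \<in> set vs. P v} = (\<lambda>l. vs ! l) ` {l. l < length vs \<and> P (vs ! l)}"
    by (auto simp: in_set_conv_nth)
  moreover have "inj_on (\<lambda>l. vs ! l) {l. l < length vs \<and> P (vs ! l)}"
    using assms by (auto intro!: inj_onI simp: nth_eq_iff_index_eq)
  ultimately show ?thesis by (simp add: card_image)
qed

definition kD :: "nat \<Rightarrow> nat" where "kD n = (if odd n then 3 else nat (hh n) + 2)"

definition cntD :: "nat \<Rightarrow> nat \<Rightarrow> nat" where
  "cntD n K = card {v \<in> carrier (dihedral_group n). clsD n v = K}"

lemma cls_lt:
  assumes n: "n \<ge> 3" and u: "u \<in> carrier (dihedral_group n)"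
  shows "clsD n u < kD n"
proof -
  obtain i s where us: "u = (i,s)" by (cases u)
  have i: "0 \<le> i" "i < int n" using u us by (auto simp: carrier_dih)
  show ?thesis
  proof (cases "odd n")
    case True then show ?thesis by (auto simp: clsD_def kD_def)
  next
    case False
    have h2: "int n = 2 * hh n" using False unfolding hh_def by presburger
    show ?thesis using False i h2 us by (auto simp: clsD_def kD_def)
  qed
qed

lemma cnt_pos:
  assumes n: "n \<ge> 3" and K: "K < kD n"
  shows "cntD n K > 0"
proof -
  have fin: "finite {v \<in> carrier (dihedral_group n). clsD n v = K}"
    by (simp add: carrier_dih)
  have "\<exists>v \<in> carrier (dihedral_group n). clsD n v = K"
  proof (cases "K = 0 \<or> K = 1")
    case True
    have "clsD n (0, False) = 0" by (simp add: clsD_def central_def)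
    moreover have "clsD n (1, False) = 1" using n by (simp add: clsD_def central_def)
    moreover have "(0::int, False) \<in> carrier (dihedral_group n)" "(1::int, False) \<in> carrier (dihedral_group n)"
      using n by (auto simp: carrier_dih)
    ultimately show ?thesis using True by blast
  next
    case False
    show ?thesis
    proof (cases "odd n")
      case True
      then have "K = 2" using K False by (auto simp: kD_def)
      moreover have "clsD n (0, True) = 2" using True by (simp add: clsD_def)
      moreover have "(0::int, True) \<in> carrier (dihedral_group n)" using n by (auto simp: carrier_dih)
      ultimately show ?thesis by blast
    next
      case ev: False
      have h2: "int n = 2 * hh n" using ev unfolding hh_def by presburger
      define p where "p = int K - 2"
      have p: "0 \<le> p" "p < hh n" using K False ev unfolding p_def kD_def by auto
      have "clsD n (p, True) = K" using ev p False unfolding clsD_def p_def by auto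
      moreover have "(p, True) \<in> carrier (dihedral_group n)" using p h2 by (auto simp: carrier_dih)
      ultimately show ?thesis by blast
    qed
  qed
  then show ?thesis using fin unfolding cntD_def by (auto simp: card_gt_0_iff)
qed

lemma reduction:
  assumes n: "n \<ge> 3" and dist: "distinct vs" and vs: "set vs = carrier (dihedral_group n)"
  shows "char_poly (sombor_matrix (carrier (dihedral_group n)) (commuting_adj (dihedral_group n)) vs)
    = (\<Prod>K<kD n. [:BD n K K, 1:] ^ (cntD n K - 1)) *
      char_poly (mat (kD n) (kD n) (\<lambda>(K,L). BD n K L * real (cntD n L) - (if K = L then BD n K K else 0)))"
proof -
  let ?V = "carrier (dihedral_group n)"
  let ?N = "length vs"
  have cnt: "card {i. i < ?N \<and> clsD n (vs ! i) = K} = cntD n K" for K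
    unfolding cntD_def using nth_card[OF dist, of "\<lambda>v. clsD n v = K"] vs by simp
  have inV: "i < ?N \<Longrightarrow> vs ! i \<in> ?V" for i using vs nth_mem by blast
  have "char_poly (sombor_matrix ?V (commuting_adj (dihedral_group n)) vs)
    = (\<Prod>K<kD n. [:BD n K K, 1:] ^ (card {i. i < ?N \<and> clsD n (vs ! i) = K} - 1)) *
      char_poly (mat (kD n) (kD n) (\<lambda>(K,L). BD n K L * real (card {i. i < ?N \<and> clsD n (vs ! i) = L}) - (if K = L then BD n K K else 0)))"
  proof (rule quotient_charpoly)
    show "sombor_matrix ?V (commuting_adj (dihedral_group n)) vs \<in> carrier_mat ?N ?N"
      by (simp add: sombor_matrix_def)
    show "\<And>i. i < ?N \<Longrightarrow> clsD n (vs ! i) < kD n" using cls_lt[OF n] inV by blast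
    show "\<And>K. K < kD n \<Longrightarrow> 0 < card {i. i < ?N \<and> clsD n (vs ! i) = K}"
      unfolding cnt using cnt_pos[OF n] by blast
    fix i j assume i: "i < ?N" and j: "j < ?N"
    have eq: "(vs ! i = vs ! j) = (i = j)" using dist i j by (simp add: nth_eq_iff_index_eq)
    show "sombor_matrix ?V (commuting_adj (dihedral_group n)) vs $$ (i, j) =
          BD n (clsD n (vs ! i)) (clsD n (vs ! j)) - (if i = j then BD n (clsD n (vs ! i)) (clsD n (vs ! i)) else 0)"
      using entry_cls[OF n inV[OF i] inV[OF j]] i j eq by (simp add: sombor_matrix_def)
  qed
  then show ?thesis unfolding cnt .
qed




lemma cnt_odd:
  assumes n: "n \<ge> 3" and odd: "odd n"
  shows "cntD n 0 = 1" "cntD n 1 = n - 1" "cntD n 2 = n"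
proof -
  have o1: "2 * x \<noteq> int n" for x using odd by presburger
  have "{v \<in> carrier (dihedral_group n). clsD n v = 0} = {(0, False)}"
    using n o1 by (auto simp: carrier_dih clsD_def central_def)
  then show "cntD n 0 = 1" by (simp add: cntD_def)
  have "{v \<in> carrier (dihedral_group n). clsD n v = 1} = ({0<..<int n}) \<times> {False}"
    using n o1 by (auto simp: carrier_dih clsD_def central_def)
  then show "cntD n 1 = n - 1" by (simp add: cntD_def card_cartesian_product)
  have "{v \<in> carrier (dihedral_group n). clsD n v = 2} = {0..<int n} \<times> {True}"
    using n odd by (auto simp: carrier_dih clsD_def central_def)
  then show "cntD n 2 = n" by (simp add: cntD_def card_cartesian_product)
qed

lemma cnt_even:
  assumes n: "n \<ge> 3" and ev: "even n"
  shows "cntD n 0 = 2" "cntD n 1 = n - 2" "\<And>p. p < n div 2 \<Longrightarrow> cntD n (p + 2) = 2"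
proof -
  have h2: "int n = 2 * hh n" using ev unfolding hh_def by presburger
  have hpos: "hh n \<ge> 2" using n h2 by linarith
  have "{v \<in> carrier (dihedral_group n). clsD n v = 0} = {(0, False), (hh n, False)}"
    using n h2 hpos by (auto simp: carrier_dih clsD_def central_def)
  then show "cntD n 0 = 2" using hpos by (simp add: cntD_def)
  have "{v \<in> carrier (dihedral_group n). clsD n v = 1} = ({0..<int n} - {0, hh n}) \<times> {False}"
    using n h2 by (auto simp: carrier_dih clsD_def central_def)
  moreover have "card ({0..<int n} - {0, hh n}) = n - 2"
    using hpos h2 by (subst card_Diff_subset) auto
  ultimately show "cntD n 1 = n - 2" by (simp add: cntD_def card_cartesian_product)
  fix p assume p: "p < n div 2"
  have pp: "int p < hh n" using p unfolding hh_def by linarith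
  have "{v \<in> carrier (dihedral_group n). clsD n v = p + 2} = {(int p, True), (int p + hh n, True)}"
    using h2 pp ev by (auto simp: carrier_dih clsD_def)
  then show "cntD n (p + 2) = 2" using hpos by (simp add: cntD_def)
qed




lemma odd_final:
  assumes n: "n \<ge> 3" and odd: "odd n" and dist: "distinct vs" and vs: "set vs = carrier (dihedral_group n)"
  shows "char_poly (sombor_matrix (carrier (dihedral_group n)) (commuting_adj (dihedral_group n)) vs)
      = [: (real n - 1) * sqrt 2, 1 :] ^ (n - 2) * [: 0, 1 :] ^ (n - 1) *
        [: sqrt 2 * (4 * real n ^ 5 - 16 * real n ^ 4 + 22 * real n ^ 3 - 14 * real n ^ 2 + 4 * real n),
           15 * real n ^ 2 - 9 * real n ^ 3 - 10 * real n + 2,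
           sqrt 2 * (3 * real n - real n ^ 2 - 2),
           1 :]"
proof -
  define N where "N = real n"
  define al where "al = sqrt ((2*N-1)^2 + (N-1)^2)"
  define ga where "ga = sqrt ((2*N-1)^2 + 1)"
  have ss: "sqrt 2 * sqrt 2 = 2" by simp
  have aa: "al * al = (2*N-1)^2 + (N-1)^2" unfolding al_def by (simp add: add_nonneg_nonneg)
  have gg: "ga * ga = (2*N-1)^2 + 1" unfolding ga_def by simp
  have N3: "N \<ge> 3" using n unfolding N_def by simp
  have d0: "real (dD n 0) = 2*N - 1" using n by (simp add: dD_def N_def of_nat_diff)
  have d1: "real (dD n 1) = N - 1" using n by (simp add: dD_def N_def of_nat_diff)
  have d2: "real (dD n 2) = 1" using odd by (simp add: dD_def)
  have B: "BD n 0 1 = al" "BD n 1 0 = al" "BD n 0 2 = ga" "BD n 2 0 = ga"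
    "BD n 1 1 = (N - 1) * sqrt 2" "BD n 2 2 = 0" "BD n 1 2 = 0" "BD n 2 1 = 0"
    using d0 d1 d2 N3 odd by (auto simp: BD_def AD_def al_def ga_def add.commute sqrt_sq2 sqrt_2sq)
  have k: "kD n = 3" using odd by (simp add: kD_def)
  have c: "real (cntD n 0) = 1" "real (cntD n 1) = N - 1" "real (cntD n 2) = N"
    using cnt_odd[OF n odd] n by (auto simp: N_def of_nat_diff)
  have cubic: "char_poly (mat 3 3 (\<lambda>(K,L). BD n K L * real (cntD n L) - (if K = L then BD n K K else 0)))
    = [: sqrt 2 * (4 * N ^ 5 - 16 * N ^ 4 + 22 * N ^ 3 - 14 * N ^ 2 + 4 * N),
           15 * N ^ 2 - 9 * N ^ 3 - 10 * N + 2,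
           sqrt 2 * (3 * N - N ^ 2 - 2),
           1 :]"
    apply (subst charpoly3_fun)
    apply (rule poly_eq_from_cofinite[of "{}"], simp)
    apply (simp add: B c B[simplified] c[simplified])
    using aa gg by Groebner_Basis.algebra
  show ?thesis
    unfolding reduction[OF n dist vs] k cubic
    using cnt_odd[OF n odd] B n
    by (simp add: numeral_3_eq_3 lessThan_Suc N_def numeral_2_eq_2 mult.commute)
qed


lemma big_id:
  fixes A B Y X Bp :: "real poly"
  shows "A * B * (Y * X) - Polynomial.smult k1 (Y * X) - Polynomial.smult k2 (Bp * X)
    = X * (A * B * Y - Polynomial.smult k1 Y - Polynomial.smult k2 Bp)"
  by (simp add: algebra_simps mult_smult_right mult_smult_left)

lemma even_final:
  assumes n: "n \<ge> 3" and ev: "even n" and dist: "distinct vs" and vs: "set vs = carrier (dihedral_group n)"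
  shows "char_poly (sombor_matrix (carrier (dihedral_group n)) (commuting_adj (dihedral_group n)) vs)
      = [: (2 * real n - 1) * sqrt 2, 1 :] * [: (real n - 1) * sqrt 2, 1 :] ^ (n - 3)
        * [: 3 * sqrt 2, 1 :] ^ (n div 2) *
        ([: - (2 * real n - 1) * sqrt 2, 1 :] * [: - (real n - 1) * (real n - 3) * sqrt 2, 1 :]
           * [: - 3 * sqrt 2, 1 :] ^ (n div 2)
         - Polynomial.smult (2 * (real n - 2) * (5 * real n ^ 2 - 6 * real n + 2)) ([: - 3 * sqrt 2, 1 :] ^ (n div 2))
         - Polynomial.smult (4 * real n * (2 * real n ^ 2 - 2 * real n + 5))
             ([: - (real n - 3) * (real n - 1) * sqrt 2, 1 :] * [: - 3 * sqrt 2, 1 :] ^ (n div 2 - 1)))"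
proof -
  define h where "h = n div 2"
  define N where "N = real n"
  define al where "al = sqrt ((2*N-1)^2 + (N-1)^2)"
  define de where "de = sqrt ((2*N-1)^2 + 9)"
  define c where "c = 3 * sqrt 2"
  have n2h: "n = 2 * h" using ev unfolding h_def by simp
  have h2: "h \<ge> 2" using n n2h by simp
  have NH: "N = 2 * real h" unfolding N_def using n2h by simp
  have aa: "al * al = (2*N-1)^2 + (N-1)^2" unfolding al_def by (simp add: add_nonneg_nonneg)
  have dd: "de * de = (2*N-1)^2 + 9" unfolding de_def by simp
  have N3: "N \<ge> 3" using n unfolding N_def by simp
  have d0: "real (dD n 0) = 2*N - 1" using n by (simp add: dD_def N_def of_nat_diff)
  have d1: "real (dD n 1) = N - 1" using n by (simp add: dD_def N_def of_nat_diff)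
  have d2: "K \<ge> 2 \<Longrightarrow> real (dD n K) = 3" for K using ev by (simp add: dD_def)
  have B: "BD n 0 0 = (2*N-1) * sqrt 2" "BD n 0 1 = al" "BD n 1 0 = al" "BD n 1 1 = (N - 1) * sqrt 2"
    using d0 d1 N3 by (auto simp: BD_def AD_def al_def add.commute sqrt_sq2 sqrt_2sq)
  have s18: "sqrt 18 = 3 * sqrt 2"
  proof -
    have "sqrt 18 = sqrt (3^2 * 2)" by simp
    also have "\<dots> = 3 * sqrt 2" by (simp only: real_sqrt_mult real_sqrt_abs)
    finally show ?thesis .
  qed
  have B2: "K \<ge> 2 \<Longrightarrow> BD n 0 K = de" "K \<ge> 2 \<Longrightarrow> BD n K 0 = de"
    "K \<ge> 2 \<Longrightarrow> BD n 1 K = 0" "K \<ge> 2 \<Longrightarrow> BD n K 1 = 0"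
    "K \<ge> 2 \<Longrightarrow> L \<ge> 2 \<Longrightarrow> BD n K L = (if K = L then c else 0)" for K L
    using d0 d2 ev by (auto simp: BD_def AD_def de_def add.commute c_def sqrt_sq2 s18)
  have k: "kD n = h + 2" using ev unfolding kD_def hh_def h_def by (simp add: zdiv_int[symmetric])
  have cnt: "real (cntD n 0) = 2" "real (cntD n 1) = N - 2" "\<And>K. 2 \<le> K \<Longrightarrow> K < h + 2 \<Longrightarrow> real (cntD n K) = 2"
  proof -
    show "real (cntD n 0) = 2" using cnt_even[OF n ev] by simp
    show "real (cntD n 1) = N - 2" using cnt_even[OF n ev] n by (simp add: N_def of_nat_diff)
    fix K assume K: "2 \<le> K" "K < h + 2"
    have e: "K - 2 + 2 = K" using K by simp
    have "K - 2 < n div 2" using K unfolding h_def by simp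
    then have "cntD n (K - 2 + 2) = 2" by (rule cnt_even(3)[OF n ev])
    then show "real (cntD n K) = 2" by (simp only: e)
  qed
  define w2 where "w2 K = (if K = 2 then - c else 0)" for K :: nat
  define B2f where "B2f K L = (if K = 0 \<and> L = 0 then (2*N-1) * sqrt 2
     else if K = 0 \<and> L = 1 then al * (N - 2) else if K = 0 \<and> L = 2 then 2 * de
     else if K = 1 \<and> L = 0 then 2 * al else if K = 1 \<and> L = 1 then (N - 1) * sqrt 2 * (N - 3)
     else if K = 2 \<and> L = 0 then 2 * de else 0)" for K L :: nat
  let ?Q1 = "mat (h+2) (h+2) (\<lambda>(K,L). BD n K L * real (cntD n L) - (if K = L then BD n K K else 0))"
  have Q1: "char_poly ?Q1 = (\<Prod>K<3. [:w2 K, 1:] ^ (card {i. i < h+2 \<and> min i 2 = K} - 1)) *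
     char_poly (mat 3 3 (\<lambda>(K,L). B2f K L * real (card {i. i < h+2 \<and> min i 2 = L}) - (if K = L then w2 K else 0)))"
  proof (rule quotient_charpoly)
    show "?Q1 \<in> carrier_mat (h+2) (h+2)" by simp
    show "\<And>i. i < h + 2 \<Longrightarrow> min i 2 < 3" by simp
    show "\<And>K. K < 3 \<Longrightarrow> 0 < card {i. i < h + 2 \<and> min i 2 = K}"
    proof -
      fix K :: nat assume "K < 3"
      then have "K \<in> {i. i < h + 2 \<and> min i 2 = K}" using h2 by auto
      then show "0 < card {i. i < h + 2 \<and> min i 2 = K}" by (auto simp: card_gt_0_iff)
    qed
    fix i j assume i: "i < h + 2" and j: "j < h + 2"
    show "?Q1 $$ (i, j) = B2f (min i 2) (min j 2) - (if i = j then w2 (min i 2) else 0)"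
      using i j cnt B B2 by (auto simp: B2f_def w2_def min_def algebra_simps)
  qed
  have c2: "card {i. i < h+2 \<and> min i 2 = 0} = 1" "card {i. i < h+2 \<and> min i 2 = 1} = 1"
    "card {i. i < h+2 \<and> min i 2 = 2} = h"
  proof -
    have "{i. i < h+2 \<and> min i 2 = 0} = {0}" by (auto simp: min_def)
    then show "card {i. i < h+2 \<and> min i 2 = 0} = 1" by simp
    have "{i. i < h+2 \<and> min i 2 = 1} = {1}" by (auto simp: min_def)
    then show "card {i. i < h+2 \<and> min i 2 = 1} = 1" by simp
    have "{i. i < h+2 \<and> min i 2 = 2} = {2..<h+2}" by (auto simp: min_def)
    then show "card {i. i < h+2 \<and> min i 2 = 2} = h" by simp
  qed
  define C3 where "C3 = [: - (2 * N - 1) * sqrt 2, 1 :] * [: - (N - 1) * (N - 3) * sqrt 2, 1 :] * [: - c, 1 :]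
     - Polynomial.smult (2 * (N - 2) * (5 * N ^ 2 - 6 * N + 2)) [: - c, 1 :]
     - Polynomial.smult (4 * N * (2 * N ^ 2 - 2 * N + 5)) [: - (N - 3) * (N - 1) * sqrt 2, 1 :]"
  have cubic: "char_poly (mat 3 3 (\<lambda>(K,L). B2f K L * real (card {i. i < h+2 \<and> min i 2 = L}) - (if K = L then w2 K else 0)))
    = C3"
    apply (subst charpoly3_fun)
    apply (rule poly_eq_from_cofinite[of "{}"], simp)
    apply (simp add: c2 c2[simplified] B2f_def w2_def C3_def c_def)
    using aa dd NH by Groebner_Basis.algebra
  have P2: "(\<Prod>K<3. [:w2 K, 1:] ^ (card {i. i < h+2 \<and> min i 2 = K} - 1)) = [: -c, 1:] ^ (h - 1)"
  proof -
    have e: "{..<3::nat} = {0,1,2}" by auto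
    show ?thesis unfolding e using c2 by (simp add: w2_def)
  qed
  have P1: "(\<Prod>K<kD n. [:BD n K K, 1:] ^ (cntD n K - 1)) =
      [: (2 * N - 1) * sqrt 2, 1 :] * [: (N - 1) * sqrt 2, 1 :] ^ (n - 3) * [: c, 1 :] ^ h"
  proof -
    have "(\<Prod>K<kD n. [:BD n K K, 1:] ^ (cntD n K - 1)) =
       [:BD n 0 0, 1:] ^ (cntD n 0 - 1) * ([:BD n 1 1, 1:] ^ (cntD n 1 - 1) *
         (\<Prod>p<h. [:BD n (p+2) (p+2), 1:] ^ (cntD n (p+2) - 1)))"
    proof -
      have hh2: "h + 2 = Suc (Suc h)" by simp
      show ?thesis unfolding k hh2 prod.lessThan_Suc_shift by simp
    qed
    also have "(\<Prod>p<h. [:BD n (p+2) (p+2), 1:] ^ (cntD n (p+2) - 1)) = (\<Prod>p<h. [:c, 1:])"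
    proof (rule prod.cong[OF refl])
      fix p assume "p \<in> {..<h}"
      then have "cntD n (p+2) = 2" using cnt_even(3)[OF n ev, of p] unfolding h_def by simp
      then show "[:BD n (p+2) (p+2), 1:] ^ (cntD n (p+2) - 1) = [:c, 1:]" using B2(5)[of "p+2" "p+2"] by simp
    qed
    finally show ?thesis using cnt_even[OF n ev] B by (simp add: mult_ac)
  qed
  have hs: "h = Suc (h - 1)" using h2 by simp
  have big: "[: - (2 * N - 1) * sqrt 2, 1 :] * [: - (N - 1) * (N - 3) * sqrt 2, 1 :]
           * [: - c, 1 :] ^ h
         - Polynomial.smult (2 * (N - 2) * (5 * N ^ 2 - 6 * N + 2)) ([: - c, 1 :] ^ h)
         - Polynomial.smult (4 * N * (2 * N ^ 2 - 2 * N + 5))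
             ([: - (N - 3) * (N - 1) * sqrt 2, 1 :] * [: - c, 1 :] ^ (h - 1))
       = [: -c, 1:] ^ (h - 1) * C3"
  proof -
    have hpow: "[:-c,1:]^h = [:-c,1:] * [:-c,1:]^(h-1)" using hs by (metis power_Suc)
    show ?thesis unfolding hpow C3_def by (rule big_id)
  qed
  have main: "char_poly (sombor_matrix (carrier (dihedral_group n)) (commuting_adj (dihedral_group n)) vs)
    = [: (2 * N - 1) * sqrt 2, 1 :] * [: (N - 1) * sqrt 2, 1 :] ^ (n - 3) * [: c, 1 :] ^ h *
      ([: -c, 1:] ^ (h - 1) * C3)"
    unfolding reduction[OF n dist vs] P1 unfolding k Q1 P2 cubic ..
  show ?thesis unfolding main big[symmetric] by (simp add: N_def c_def h_def)
qed

theorem corollary4p1: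
  fixes n :: nat and vs :: "(int \<times> bool) list"
  assumes "n \<ge> 3"
    and "distinct vs" and "set vs = carrier (dihedral_group n)"
  shows
   "(odd n \<longrightarrow>
      char_poly (sombor_matrix (carrier (dihedral_group n)) (commuting_adj (dihedral_group n)) vs)
      = [: (real n - 1) * sqrt 2, 1 :] ^ (n - 2) * [: 0, 1 :] ^ (n - 1) *
        [: sqrt 2 * (4 * real n ^ 5 - 16 * real n ^ 4 + 22 * real n ^ 3 - 14 * real n ^ 2 + 4 * real n),
           15 * real n ^ 2 - 9 * real n ^ 3 - 10 * real n + 2,
           sqrt 2 * (3 * real n - real n ^ 2 - 2),
           1 :])
    \<and> (even n \<longrightarrow>
      char_poly (sombor_matrix (carrier (dihedral_group n)) (commuting_adj (dihedral_group n)) vs)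
      = [: (2 * real n - 1) * sqrt 2, 1 :] * [: (real n - 1) * sqrt 2, 1 :] ^ (n - 3)
        * [: 3 * sqrt 2, 1 :] ^ (n div 2) *
        ([: - (2 * real n - 1) * sqrt 2, 1 :] * [: - (real n - 1) * (real n - 3) * sqrt 2, 1 :]
           * [: - 3 * sqrt 2, 1 :] ^ (n div 2)
         - Polynomial.smult (2 * (real n - 2) * (5 * real n ^ 2 - 6 * real n + 2)) ([: - 3 * sqrt 2, 1 :] ^ (n div 2))
         - Polynomial.smult (4 * real n * (2 * real n ^ 2 - 2 * real n + 5))
             ([: - (real n - 3) * (real n - 1) * sqrt 2, 1 :] * [: - 3 * sqrt 2, 1 :] ^ (n div 2 - 1))))"
proof (intro conjI impI)
  assume "odd n"
  then show "char_poly (sombor_matrix (carrier (dihedral_group n)) (commuting_adj (dihedral_group n)) vs)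
      = [: (real n - 1) * sqrt 2, 1 :] ^ (n - 2) * [: 0, 1 :] ^ (n - 1) *
        [: sqrt 2 * (4 * real n ^ 5 - 16 * real n ^ 4 + 22 * real n ^ 3 - 14 * real n ^ 2 + 4 * real n),
           15 * real n ^ 2 - 9 * real n ^ 3 - 10 * real n + 2,
           sqrt 2 * (3 * real n - real n ^ 2 - 2),
           1 :]"
    using odd_final assms by blast
next
  assume "even n"
  then show "char_poly (sombor_matrix (carrier (dihedral_group n)) (commuting_adj (dihedral_group n)) vs)
      = [: (2 * real n - 1) * sqrt 2, 1 :] * [: (real n - 1) * sqrt 2, 1 :] ^ (n - 3)
        * [: 3 * sqrt 2, 1 :] ^ (n div 2) *
        ([: - (2 * real n - 1) * sqrt 2, 1 :] * [: - (real n - 1) * (real n - 3) * sqrt 2, 1 :]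
           * [: - 3 * sqrt 2, 1 :] ^ (n div 2)
         - Polynomial.smult (2 * (real n - 2) * (5 * real n ^ 2 - 6 * real n + 2)) ([: - 3 * sqrt 2, 1 :] ^ (n div 2))
         - Polynomial.smult (4 * real n * (2 * real n ^ 2 - 2 * real n + 5))
             ([: - (real n - 3) * (real n - 1) * sqrt 2, 1 :] * [: - 3 * sqrt 2, 1 :] ^ (n div 2 - 1)))"
    using even_final assms by blast
qed

end
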